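(* Let $S_{r,N}$ be a nontrivial atomic exponential Puiseux semiring. Then $|\Delta(S_{r,N})|=1$ if and only if $N=\mathbb{N}$.
   Context: $\mathbb{N}=\{0,1,2,\dots\}$. A numerical monoid $N$ is an additive submonoid of $\mathbb{N}$ with finite complement in $\mathbb{N}$. For $r\in\mathbb{Q}_{>0}$ write $r=\mathsf{n}(r)/\mathsf{d}(r)$ in lowest terms. The exponential Puiseux semiring $S_{r,N}$ is the additive submonoid of $\mathbb{Q}_{\ge0}$ generated by $\{r^k:k\in N\}$; it is nontrivial if $r\notin\mathbb{N}$, and then atomic iff $\mathsf{n}(r)>1$. For an atomic monoid $M$ and $x\in M$ with set of lengths $\mathsf{L}(x)$, a positive integer $d$ is a distance of $x$ if $\mathsf{L}(x)\cap\{l,\dots,l+d\}=\{l,l+d\}$ for some $l\in\mathsf{L}(x)$; $\Delta(M)$ is the union over $x\in M$ of the sets of distances of $x$. *)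

theory Defs
  imports Complex_Main "HOL-Library.Multiset"
begin

definition numerical_monoid :: "nat set \<Rightarrow> bool" where
  "numerical_monoid N \<longleftrightarrow> 0 \<in> N \<and> (\<forall>a\<in>N. \<forall>b\<in>N. a + b \<in> N) \<and> finite (UNIV - N)"

inductive_set gen_monoid :: "rat set \<Rightarrow> rat set" for G :: "rat set" where
  zero: "0 \<in> gen_monoid G"
| gen: "g \<in> G \<Longrightarrow> g \<in> gen_monoid G"
| add: "x \<in> gen_monoid G \<Longrightarrow> y \<in> gen_monoid G \<Longrightarrow> x + y \<in> gen_monoid G"

definition exp_puiseux :: "rat \<Rightarrow> nat set \<Rightarrow> rat set" where
  "exp_puiseux r N = gen_monoid {r ^ k | k. k \<in> N}"

definition is_unit_in :: "rat set \<Rightarrow> rat \<Rightarrow> bool" where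
  "is_unit_in M u \<longleftrightarrow> u \<in> M \<and> - u \<in> M"

definition atoms :: "rat set \<Rightarrow> rat set" where
  "atoms M = {a \<in> M. \<not> is_unit_in M a \<and>
      (\<forall>b\<in>M. \<forall>c\<in>M. a = b + c \<longrightarrow> is_unit_in M b \<or> is_unit_in M c)}"

definition atomic :: "rat set \<Rightarrow> bool" where
  "atomic M \<longleftrightarrow> (\<forall>x\<in>M. \<not> is_unit_in M x \<longrightarrow>
      (\<exists>m. set_mset m \<subseteq> atoms M \<and> m \<noteq> {#} \<and> sum_mset m = x))"

(* set of lengths (for reduced monoids: factorizations = multisets of atoms) *)
definition lengths :: "rat set \<Rightarrow> rat \<Rightarrow> nat set" where
  "lengths M x = {size m | m. set_mset m \<subseteq> atoms M \<and> sum_mset m = x}"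

definition distances :: "rat set \<Rightarrow> rat \<Rightarrow> nat set" where
  "distances M x = {d. d > 0 \<and> (\<exists>l\<in>lengths M x. l + d \<in> lengths M x \<and>
      (\<forall>j. l < j \<and> j < l + d \<longrightarrow> j \<notin> lengths M x))}"

definition Delta :: "rat set \<Rightarrow> nat set" where
  "Delta M = (\<Union>x\<in>M. distances M x)"

end

theory Submission
  imports Defs
begin


lemma gen_monoid_iff: "x \<in> gen_monoid G \<longleftrightarrow> (\<exists>m. set_mset m \<subseteq> G \<and> x = sum_mset m)"
proof
  assume "x \<in> gen_monoid G" then show "\<exists>m. set_mset m \<subseteq> G \<and> x = sum_mset m"
  proof (induction rule: gen_monoid.induct)
    case zero then show ?case by (intro exI[of _ "{#}"]) simp
  next
    case (gen g) then show ?case by (intro exI[of _ "{#g#}"]) simp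
  next
    case (add x y)
    then obtain mx my where "set_mset mx \<subseteq> G" "x = sum_mset mx" "set_mset my \<subseteq> G" "y = sum_mset my" by blast
    then show ?case by (intro exI[of _ "mx+my"]) auto
  qed
next
  assume "\<exists>m. set_mset m \<subseteq> G \<and> x = sum_mset m"
  then obtain m where "set_mset m \<subseteq> G" "x = sum_mset m" by blast
  then show "x \<in> gen_monoid G"
  proof (induction m arbitrary: x)
    case empty then show ?case by (simp add: gen_monoid.zero)
  next
    case (add a m) then show ?case by (auto intro: gen_monoid.intros)
  qed
qed

lemma mset_image_obtain: "set_mset m \<subseteq> f ` S \<Longrightarrow> \<exists>A. set_mset A \<subseteq> S \<and> m = image_mset f A"
proof (induction m)
  case empty then show ?case by (intro exI[of _ "{#}"]) simp
next
  case (add x m)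
  then obtain A where A: "set_mset A \<subseteq> S" "m = image_mset f A" by auto
  from add.prems obtain a where "a \<in> S" "x = f a" by auto
  with A show ?case by (intro exI[of _ "add_mset a A"]) auto
qed

locale eps0 =
  fixes n d :: nat and r :: rat
  assumes r_eq: "r = of_nat n / of_nat d" and d2: "2 \<le> d" and n1: "1 \<le> n"
    and cop: "coprime n d"
begin

definition val :: "nat multiset \<Rightarrow> rat" where
  "val A = sum_mset (image_mset (\<lambda>a. r ^ a) A)"

definition move :: "nat multiset \<Rightarrow> nat multiset \<Rightarrow> bool" where
  "move A B \<longleftrightarrow> (\<exists>j A0. A = A0 + replicate_mset d (Suc j) \<and> B = A0 + replicate_mset n j)"

definition nomove :: "nat multiset \<Rightarrow> bool" where
  "nomove A \<longleftrightarrow> (\<forall>j. count A (Suc j) < d)"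

definition Phi :: "nat multiset \<Rightarrow> nat" where
  "Phi A = sum_mset (image_mset (\<lambda>a. n ^ a) A)"

definition F :: "(nat \<Rightarrow> nat) \<Rightarrow> nat \<Rightarrow> nat" where
  "F c D = (\<Sum>j\<le>D. c j * n ^ j * d ^ (D - j))"

lemma r_pos: "r > 0" using r_eq d2 n1 by simp

lemma key: "of_nat d * r ^ Suc j = of_nat n * r ^ j"
  using r_eq d2 by (simp add: field_simps)

lemma val_plus[simp]: "val (A + B) = val A + val B" by (simp add: val_def)
lemma val_rep[simp]: "val (replicate_mset k a) = of_nat k * r ^ a" by (simp add: val_def)
lemma val_empty[simp]: "val {#} = 0" by (simp add: val_def)
lemma val_add_mset[simp]: "val (add_mset a A) = r ^ a + val A" by (simp add: val_def)

lemma val_nonneg: "val A \<ge> 0"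
  using r_pos by (induction A) auto

lemma val_pos: "A \<noteq> {#} \<Longrightarrow> val A > 0"
proof (induction A)
  case empty then show ?case by simp
next
  case (add a A) then show ?case using r_pos val_nonneg[of A] by (simp add: add_pos_nonneg)
qed

lemma move_val: "move A B \<Longrightarrow> val B = val A"
  unfolding move_def using key by (auto simp: mult.commute)

lemma move_size: "move A B \<Longrightarrow> int (size B) = int (size A) + int n - int d"
  unfolding move_def by auto

lemma Phi_plus[simp]: "Phi (A + B) = Phi A + Phi B" by (simp add: Phi_def)

lemma move_Phi: "move A B \<Longrightarrow> Phi B < Phi A"
proof -
  assume "move A B"
  then obtain j A0 where A: "A = A0 + replicate_mset d (Suc j)" and B: "B = A0 + replicate_mset n j"
    unfolding move_def by blast
  have "n * n ^ j < d * n ^ Suc j" using d2 n1 by simp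
  then show ?thesis unfolding A B by (simp add: Phi_def)
qed

lemma chain: "(move ^^ k) A B \<Longrightarrow> val B = val A \<and> int (size B) = int (size A) + int k * (int n - int d)"
proof (induction k arbitrary: B)
  case 0 then show ?case by simp
next
  case (Suc k)
  from Suc.prems obtain Y where "(move ^^ k) A Y" "move Y B" by (rule relpowp_Suc_E)
  with Suc.IH[of Y] move_val[of Y B] move_size[of Y B] show ?case by (simp add: algebra_simps)
qed

lemma split_rep: "d \<le> count A x \<Longrightarrow> A = (A - replicate_mset d x) + replicate_mset d x"
  by (rule multiset_eqI) auto

lemma exists_nomove: "\<exists>k B. (move ^^ k) A B \<and> nomove B"
proof (induction "Phi A" arbitrary: A rule: less_induct)
  case less
  show ?case
  proof (cases "nomove A")
    case True then show ?thesis by (intro exI[of _ 0] exI[of _ A]) simp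
  next
    case False
    then obtain j where j: "d \<le> count A (Suc j)" unfolding nomove_def by (auto simp: not_less)
    define A0 where "A0 = A - replicate_mset d (Suc j)"
    have "A = A0 + replicate_mset d (Suc j)" unfolding A0_def by (rule split_rep[OF j])
    then have mv: "move A (A0 + replicate_mset n j)" unfolding move_def by blast
    from less[OF move_Phi[OF mv]] obtain k B where "(move ^^ k) (A0 + replicate_mset n j) B" "nomove B" by blast
    with mv relpowp_Suc_I2[of move A _ k B] show ?thesis by blast
  qed
qed

lemma F_Suc: "F c (Suc D) = d * F c D + c (Suc D) * n ^ Suc D"
proof -
  have "F c (Suc D) = (\<Sum>j\<le>D. c j * n ^ j * d ^ (Suc D - j)) + c (Suc D) * n ^ Suc D"
    unfolding F_def by simp
  also have "(\<Sum>j\<le>D. c j * n ^ j * d ^ (Suc D - j)) = d * F c D"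
    unfolding F_def sum_distrib_left by (rule sum.cong) (auto simp: Suc_diff_le)
  finally show ?thesis .
qed

lemma F_count: "set_mset A \<subseteq> {..D} \<Longrightarrow> of_nat (F (count A) D) = val A * of_nat d ^ D"
proof (induction A)
  case empty then show ?case by (simp add: F_def)
next
  case (add a A)
  then have aD: "a \<le> D" and AD: "set_mset A \<subseteq> {..D}" by auto
  have "F (count (add_mset a A)) D = (\<Sum>j\<le>D. count A j * n ^ j * d ^ (D - j) + (if j = a then n ^ j * d ^ (D - j) else 0))"
    unfolding F_def by (rule sum.cong) (auto simp: algebra_simps)
  also have "\<dots> = F (count A) D + n ^ a * d ^ (D - a)"
    unfolding F_def sum.distrib using aD by (simp add: sum.delta)
  finally have "F (count (add_mset a A)) D = F (count A) D + n ^ a * d ^ (D - a)" .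
  moreover have "r ^ a * of_nat d ^ D = of_nat (n ^ a * d ^ (D - a))"
  proof -
    have "of_nat d ^ D = (of_nat d ^ a * of_nat d ^ (D - a) :: rat)"
      using aD by (simp add: power_add[symmetric])
    moreover have "r * of_nat d = of_nat n" using r_eq d2 by simp
    then have "r ^ a * of_nat d ^ a = (of_nat n ^ a :: rat)" by (metis power_mult_distrib)
    ultimately show ?thesis by simp
  qed
  ultimately show ?case using add.IH[OF AD] by (simp only: of_nat_add val_add_mset) (simp add: algebra_simps)
qed

end

context eps0 begin

lemma F_inj: "(\<forall>j. 0 < j \<longrightarrow> c j < d) \<Longrightarrow> (\<forall>j. 0 < j \<longrightarrow> c' j < d) \<Longrightarrow> F c D = F c' D \<Longrightarrow> j \<le> D \<Longrightarrow> c j = c' j"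
proof (induction D arbitrary: j)
  case 0 then show ?case by (simp add: F_def)
next
  case (Suc D)
  have eq: "d * F c D + c (Suc D) * n ^ Suc D = d * F c' D + c' (Suc D) * n ^ Suc D"
    using Suc.prems(3) by (simp add: F_Suc)
  have top: "c (Suc D) = c' (Suc D)"
  proof -
    have e2: "int d * int (F c D) + int (c (Suc D)) * int (n ^ Suc D) = int d * int (F c' D) + int (c' (Suc D)) * int (n ^ Suc D)"
      using arg_cong[OF eq, of int] by simp
    have "(int (c (Suc D)) - int (c' (Suc D))) * int (n ^ Suc D) = int d * (int (F c' D) - int (F c D))"
      using e2 by (simp add: algebra_simps)
    then have "int d dvd (int (c (Suc D)) - int (c' (Suc D))) * int (n ^ Suc D)"
      by (metis dvd_triv_left)
    moreover have "coprime (int d) (int (n ^ Suc D))" using cop by (simp add: coprime_commute)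
    ultimately have dv: "int d dvd int (c (Suc D)) - int (c' (Suc D))" using coprime_dvd_mult_left_iff by blast
    have lt: "c (Suc D) < d" "c' (Suc D) < d" using Suc.prems by auto
    show ?thesis
    proof (rule ccontr)
      assume "c (Suc D) \<noteq> c' (Suc D)"
      then have "int (c (Suc D)) - int (c' (Suc D)) \<noteq> 0" by simp
      from dvd_imp_le_int[OF this dv] lt show False by simp
    qed
  qed
  then have "F c D = F c' D" using eq d2 by simp
  show ?case
  proof (cases "j = Suc D")
    case True then show ?thesis using top by simp
  next
    case False then show ?thesis using Suc.IH[OF Suc.prems(1,2) \<open>F c D = F c' D\<close>] Suc.prems(4) by simp
  qed
qed

lemma nomove_unique: assumes "nomove B" "nomove C" "val B = val C" shows "B = C"
proof (rule multiset_eqI)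
  fix j
  define D where "D = Max (insert j (set_mset (B + C)))"
  have fin: "finite (insert j (set_mset (B+C)))" by simp
  have BD: "set_mset B \<subseteq> {..D}" "set_mset C \<subseteq> {..D}" "j \<le> D"
    using Max_ge[OF fin] unfolding D_def by auto
  have "of_nat (F (count B) D) = (of_nat (F (count C) D) :: rat)"
    using F_count[OF BD(1)] F_count[OF BD(2)] assms(3) by simp
  then have FF: "F (count B) D = F (count C) D" by simp
  have nb: "\<forall>j. 0 < j \<longrightarrow> count B j < d" "\<forall>j. 0 < j \<longrightarrow> count C j < d"
    using assms(1,2) unfolding nomove_def by (metis gr0_implies_Suc)+
  show "count B j = count C j" using F_inj[OF nb FF BD(3)] .
qed

lemma struct: "val A = val A' \<Longrightarrow> (move ^^ k) A' C \<Longrightarrow> nomove C \<Longrightarrow> \<exists>k'. (move ^^ k') A C"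
proof -
  assume a: "val A = val A'" "(move ^^ k) A' C" "nomove C"
  obtain k' B where "(move ^^ k') A B" "nomove B" using exists_nomove by blast
  moreover have "B = C" using nomove_unique[OF \<open>nomove B\<close> a(3)] chain[OF a(2)] chain[OF \<open>(move ^^ k') A B\<close>] a(1) by simp
  ultimately show ?thesis by blast
qed

lemma cong_size: "val A = val B \<Longrightarrow> (int d - int n) dvd (int (size A) - int (size B))"
proof -
  assume v: "val A = val B"
  obtain k C where kc: "(move ^^ k) A C" "nomove C" using exists_nomove by blast
  obtain k' where k': "(move ^^ k') B C" using struct[OF v[symmetric] kc] by blast
  have "int (size C) = int (size A) + int k * (int n - int d)" using chain[OF kc(1)] by simp
  moreover have "int (size C) = int (size B) + int k' * (int n - int d)" using chain[OF k'] by simp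
  ultimately have "int (size A) - int (size B) = (int d - int n) * (int k - int k')" by (simp add: algebra_simps)
  then show ?thesis by simp
qed

lemma gens_eq: "{r ^ k | k. k \<in> N} = (\<lambda>k. r ^ k) ` N" by auto

lemma elem_iff: "x \<in> exp_puiseux r N \<longleftrightarrow> (\<exists>A. set_mset A \<subseteq> N \<and> x = val A)"
proof
  assume "x \<in> exp_puiseux r N"
  then obtain m where m: "set_mset m \<subseteq> (\<lambda>k. r ^ k) ` N" "x = sum_mset m"
    unfolding exp_puiseux_def gen_monoid_iff gens_eq by blast
  from mset_image_obtain[OF m(1)] obtain A where "set_mset A \<subseteq> N" "m = image_mset (\<lambda>k. r ^ k) A" by blast
  with m(2) show "\<exists>A. set_mset A \<subseteq> N \<and> x = val A" unfolding val_def by blast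
next
  assume "\<exists>A. set_mset A \<subseteq> N \<and> x = val A"
  then obtain A where A: "set_mset A \<subseteq> N" "x = val A" by blast
  then show "x \<in> exp_puiseux r N"
    unfolding exp_puiseux_def gen_monoid_iff gens_eq val_def
    by (intro exI[of _ "image_mset (\<lambda>k. r ^ k) A"]) auto
qed

lemma val_in: "set_mset A \<subseteq> N \<Longrightarrow> val A \<in> exp_puiseux r N"
  using elem_iff by blast

lemma elem_nonneg: "x \<in> exp_puiseux r N \<Longrightarrow> x \<ge> 0"
  using elem_iff val_nonneg by metis

lemma unit_iff: "is_unit_in (exp_puiseux r N) x \<longleftrightarrow> x = 0"
proof
  assume "is_unit_in (exp_puiseux r N) x"
  then have "x \<ge> 0" "-x \<ge> 0" unfolding is_unit_in_def using elem_nonneg by blast+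
  then show "x = 0" by simp
next
  assume "x = 0" then show "is_unit_in (exp_puiseux r N) x"
    unfolding is_unit_in_def using val_in[of "{#}" N] by simp
qed

lemma atoms_sub: "a \<in> atoms (exp_puiseux r N) \<Longrightarrow> \<exists>k\<in>N. a = r ^ k"
proof -
  assume at: "a \<in> atoms (exp_puiseux r N)"
  then have aM: "a \<in> exp_puiseux r N" and a0: "a \<noteq> 0"
    and sp: "\<And>b c. b \<in> exp_puiseux r N \<Longrightarrow> c \<in> exp_puiseux r N \<Longrightarrow> a = b + c \<Longrightarrow> b = 0 \<or> c = 0"
    unfolding atoms_def unit_iff by auto
  obtain A where A: "set_mset A \<subseteq> N" "a = val A" using aM elem_iff by blast
  have "A \<noteq> {#}" using A a0 by auto
  then obtain k A' where AA: "A = add_mset k A'" by (metis multiset_cases)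
  have kN: "k \<in> N" "set_mset A' \<subseteq> N" using A AA by auto
  have "a = r ^ k + val A'" using A AA by simp
  from sp[OF _ val_in[OF kN(2)] this] have "r ^ k = 0 \<or> val A' = 0"
    using val_in[of "{#k#}" N] kN by simp
  then have "A' = {#}" using r_pos val_pos by force
  then show ?thesis using A AA kN by auto
qed

lemma atoms_eq: assumes n2: "2 \<le> n" shows "atoms (exp_puiseux r N) = (\<lambda>k. r ^ k) ` N"
proof
  show "atoms (exp_puiseux r N) \<subseteq> (\<lambda>k. r ^ k) ` N" using atoms_sub by blast
next
  show "(\<lambda>k. r ^ k) ` N \<subseteq> atoms (exp_puiseux r N)"
  proof
    fix a assume "a \<in> (\<lambda>k. r ^ k) ` N"
    then obtain k where kN: "k \<in> N" and ak: "a = r ^ k" by blast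
    have aM: "a \<in> exp_puiseux r N" using val_in[of "{#k#}" N] kN ak by simp
    have a0: "a \<noteq> 0" using ak r_pos by simp
    have "\<forall>b\<in>exp_puiseux r N. \<forall>c\<in>exp_puiseux r N. a = b + c \<longrightarrow> b = 0 \<or> c = 0"
    proof (intro ballI impI, rule ccontr)
      fix b c assume bM: "b \<in> exp_puiseux r N" and cM: "c \<in> exp_puiseux r N" and abc: "a = b + c"
        and nz: "\<not> (b = 0 \<or> c = 0)"
      obtain B where B: "set_mset B \<subseteq> N" "b = val B" using bM elem_iff by blast
      obtain C where C: "set_mset C \<subseteq> N" "c = val C" using cM elem_iff by blast
      have "B \<noteq> {#}" "C \<noteq> {#}" using B C nz by auto
      then have sz: "2 \<le> size (B + C)" by (simp add: Suc_le_eq nonempty_has_size)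
      have v: "val (B + C) = val {#k#}" using abc ak B C by simp
      have nm: "nomove {#k#}" unfolding nomove_def using d2 by auto
      obtain k' where k': "(move ^^ k') (B + C) {#k#}" using struct[OF v _ nm, of 0] by auto
      show False
      proof (cases k')
        case 0 then show False using k' sz by simp
      next
        case (Suc m)
        then obtain Y where "move Y {#k#}" using k' by (metis relpowp_Suc_E)
        then obtain j Y0 where "{#k#} = Y0 + replicate_mset n j" unfolding move_def by blast
        then have "size {#k#} \<ge> n" by (metis le_add2 size_replicate_mset size_union)
        then show False using n2 by simp
      qed
    qed
    then show "a \<in> atoms (exp_puiseux r N)" using aM a0 unfolding atoms_def unit_iff by blast
  qed
qed

lemma lengths_eq: assumes n2: "2 \<le> n"
  shows "lengths (exp_puiseux r N) x = {size A | A. set_mset A \<subseteq> N \<and> val A = x}"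
proof
  show "lengths (exp_puiseux r N) x \<subseteq> {size A | A. set_mset A \<subseteq> N \<and> val A = x}"
  proof
    fix l assume "l \<in> lengths (exp_puiseux r N) x"
    then obtain m where m: "l = size m" "set_mset m \<subseteq> (\<lambda>k. r ^ k) ` N" "sum_mset m = x"
      unfolding lengths_def atoms_eq[OF n2] by blast
    from mset_image_obtain[OF m(2)] obtain A where "set_mset A \<subseteq> N" "m = image_mset (\<lambda>k. r ^ k) A" by blast
    with m show "l \<in> {size A | A. set_mset A \<subseteq> N \<and> val A = x}" unfolding val_def by auto
  qed
next
  show "{size A | A. set_mset A \<subseteq> N \<and> val A = x} \<subseteq> lengths (exp_puiseux r N) x"
  proof
    fix l assume "l \<in> {size A | A. set_mset A \<subseteq> N \<and> val A = x}"
    then obtain A where A: "l = size A" "set_mset A \<subseteq> N" "val A = x" by blast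
    then show "l \<in> lengths (exp_puiseux r N) x" unfolding lengths_def atoms_eq[OF n2] val_def
      by (intro CollectI exI[of _ "image_mset (\<lambda>k. r ^ k) A"]) auto
  qed
qed

end

context eps0 begin

lemma n_ne_d: "n \<noteq> d"
  using cop d2 by auto

lemma dist_intro:
  assumes "x \<in> M" "l \<in> lengths M x" "l + e \<in> lengths M x" "0 < e"
    "\<And>j. l < j \<Longrightarrow> j < l + e \<Longrightarrow> j \<notin> lengths M x"
  shows "e \<in> Delta M"
  unfolding Delta_def distances_def using assms by blast

lemma delta_in:
  assumes n2: "2 \<le> n" and K: "K \<in> N" "Suc K \<in> N"
  shows "nat \<bar>int n - int d\<bar> \<in> Delta (exp_puiseux r N)"
proof -
  let ?M = "exp_puiseux r N"
  define x where "x = of_nat n * r ^ K"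
  have v1: "val (replicate_mset n K) = x" unfolding x_def by simp
  have v2: "val (replicate_mset d (Suc K)) = x" unfolding x_def using key by simp
  have xM: "x \<in> ?M" using val_in[of "replicate_mset n K" N] K v1 by auto
  have nL: "n \<in> lengths ?M x" unfolding lengths_eq[OF n2] using v1 K
    by (intro CollectI exI[of _ "replicate_mset n K"]) auto
  have dL: "d \<in> lengths ?M x" unfolding lengths_eq[OF n2] using v2 K
    by (intro CollectI exI[of _ "replicate_mset d (Suc K)"]) auto
  have cg: "(int d - int n) dvd (int j - int n)" if "j \<in> lengths ?M x" for j
  proof -
    from that obtain A where "j = size A" "val A = x" unfolding lengths_eq[OF n2] by blast
    then show ?thesis using cong_size[of A "replicate_mset n K"] v1 by simp
  qed
  show ?thesis
  proof (cases "n < d")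
    case True
    have "d - n \<in> Delta ?M"
    proof (rule dist_intro[OF xM nL])
      show "n + (d - n) \<in> lengths ?M x" using dL True by simp
      show "0 < d - n" using True by simp
      fix j assume j0: "n < j" "j < n + (d - n)"
      show "j \<notin> lengths ?M x"
      proof
      assume j3: "j \<in> lengths ?M x"
      note j = j0 j3
      then have "int j - int n \<noteq> 0" by simp
      from dvd_imp_le_int[OF this cg[OF j(3)]] j show False by simp
      qed
    qed
    then show ?thesis using True by (simp add: nat_diff_distrib)
  next
    case False
    then have lt: "d < n" using n_ne_d by simp
    have "n - d \<in> Delta ?M"
    proof (rule dist_intro[OF xM dL])
      show "d + (n - d) \<in> lengths ?M x" using nL lt by simp
      show "0 < n - d" using lt by simp
      fix j assume j0: "d < j" "j < d + (n - d)"
      show "j \<notin> lengths ?M x"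
      proof
      assume j3: "j \<in> lengths ?M x"
      note j = j0 j3
      then have "int j - int n \<noteq> 0" by simp
      from dvd_imp_le_int[OF this cg[OF j(3)]] j show False by simp
      qed
    qed
    then show ?thesis using lt by (simp add: nat_diff_distrib)
  qed
qed

end

context eps0 begin

lemma split_chain: "(move ^^ (a + b)) A C \<Longrightarrow> \<exists>Y. (move ^^ a) A Y \<and> (move ^^ b) Y C"
  by (simp add: relpowp_add OO_def)

lemma upper:
  assumes n2: "2 \<le> n" and e: "e \<in> Delta (exp_puiseux r UNIV)"
  shows "e = nat \<bar>int n - int d\<bar>"
proof -
  let ?M = "exp_puiseux r UNIV"
  from e obtain x l where xM: "x \<in> ?M" and e0: "0 < e" and lL: "l \<in> lengths ?M x"
    and leL: "l + e \<in> lengths ?M x" and gap: "\<And>j. l < j \<Longrightarrow> j < l + e \<Longrightarrow> j \<notin> lengths ?M x"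
    unfolding Delta_def distances_def by blast
  have LL: "lengths ?M x = {size A | A. val A = x}" using lengths_eq[OF n2, of UNIV] by simp
  obtain A where A: "l = size A" "val A = x" using lL LL by blast
  obtain B where B: "l + e = size B" "val B = x" using leL LL by blast
  obtain kA C where kA: "(move ^^ kA) A C" "nomove C" using exists_nomove by blast
  obtain kB where kB: "(move ^^ kB) B C" using struct[of B A kA C] A B kA by auto
  have cA: "int (size C) = int l + int kA * (int n - int d)" using chain[OF kA(1)] A by simp
  have cB: "int (size C) = int l + int e + int kB * (int n - int d)" using chain[OF kB] B
    by (metis of_nat_add)
  have ee: "int e = (int kA - int kB) * (int n - int d)" using cA cB by (simp add: algebra_simps)
  show ?thesis
  proof (cases "n < d")
    case True
    have "0 < (int kA - int kB) * (int n - int d)" using ee e0 by simp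
    then have kk: "kA < kB" using True by (simp add: zero_less_mult_iff)
    have "(move ^^ ((kB - Suc kA) + Suc kA)) B C" using kB kk by simp
    then obtain Y where Y: "(move ^^ (kB - Suc kA)) B Y" "(move ^^ Suc kA) Y C"
      using split_chain by blast
    have "int (size C) = int (size Y) + int (Suc kA) * (int n - int d)" "val Y = x"
      using chain[OF Y(2)] chain[OF Y(1)] B by auto
    then have sY: "int (size Y) = int l + (int d - int n)" using cA by (simp add: algebra_simps)
    have YL: "l + (d - n) \<in> lengths ?M x" using sY True \<open>val Y = x\<close> LL
      by (auto intro!: exI[of _ Y])
    have ge: "int e \<ge> int d - int n"
    proof -
      have "int e = (int kB - int kA) * (int d - int n)" using ee by (simp add: algebra_simps)
      moreover have "int kB - int kA \<ge> 1" using kk by simp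
      moreover have "int d - int n > 0" using True by simp
      ultimately show ?thesis by (metis mult_le_cancel_right1 less_le_not_le)
    qed
    have "\<not> (l + (d - n) < l + e)" using gap[of "l + (d - n)"] YL True by (metis less_add_same_cancel1 zero_less_diff)
    then have "e = d - n" using ge True by simp
    then show ?thesis using True by (simp add: nat_diff_distrib)
  next
    case False
    then have lt: "d < n" using n_ne_d by simp
    have "0 < (int kA - int kB) * (int n - int d)" using ee e0 by simp
    then have kk: "kB < kA" using lt by (simp add: zero_less_mult_iff)
    have "(move ^^ (Suc 0 + (kA - Suc 0))) A C" using kA kk by simp
    then obtain Y where Y: "(move ^^ Suc 0) A Y" "(move ^^ (kA - Suc 0)) Y C"
      using split_chain by blast
    have "int (size Y) = int l + int n - int d" "val Y = x"
      using chain[OF Y(1)] A by auto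
    then have YL: "l + (n - d) \<in> lengths ?M x" using lt LL
      by (auto intro!: exI[of _ Y])
    have ge: "int e \<ge> int n - int d"
    proof -
      have "int kA - int kB \<ge> 1" using kk by simp
      moreover have "int n - int d > 0" using lt by simp
      ultimately show ?thesis using ee by (metis mult_le_cancel_right1 less_le_not_le)
    qed
    have "\<not> (l + (n - d) < l + e)" using gap[of "l + (n - d)"] YL lt by (metis less_add_same_cancel1 zero_less_diff)
    then have "e = n - d" using ge lt by simp
    then show ?thesis using lt by (simp add: nat_diff_distrib)
  qed
qed

end

lemma lem2: "2 * (a::int) \<le> x \<Longrightarrow> 0 < a \<Longrightarrow> a < x" by linarith

context eps0 begin

lemma other:
  assumes n2: "2 \<le> n" and one: "1 \<notin> N" and K: "K \<in> N" "1 \<le> K" and N0: "0 \<in> N"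
  shows "\<exists>e \<in> Delta (exp_puiseux r N). e \<noteq> nat \<bar>int n - int d\<bar>"
proof -
  let ?M = "exp_puiseux r N"
  define x where "x = (of_nat (n ^ K) :: rat)"
  define A1 where "A1 = replicate_mset (n ^ K) (0::nat)"
  have v1: "val A1 = x" unfolding x_def A1_def by simp
  have "r ^ K * of_nat d ^ K = (of_nat n ^ K :: rat)"
  proof -
    have "r * of_nat d = of_nat n" using r_eq d2 by simp
    then show ?thesis by (metis power_mult_distrib)
  qed
  then have v2: "val (replicate_mset (d ^ K) K) = x" unfolding x_def by (simp add: mult.commute)
  have xM: "x \<in> ?M" using val_in[of A1 N] v1 N0 unfolding A1_def by auto
  have nL: "n ^ K \<in> lengths ?M x" unfolding lengths_eq[OF n2] using v1 N0
    by (intro CollectI exI[of _ A1]) (auto simp: A1_def)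
  have dL: "d ^ K \<in> lengths ?M x" unfolding lengths_eq[OF n2] using v2 K
    by (intro CollectI exI[of _ "replicate_mset (d ^ K) K"]) auto
  have nm: "nomove A1" unfolding nomove_def A1_def using d2 by simp
  have P: "\<exists>k. k \<noteq> 1 \<and> int (n ^ K) = int l + int k * (int n - int d)" if "l \<in> lengths ?M x" for l
  proof -
    from that obtain A where A: "l = size A" "set_mset A \<subseteq> N" "val A = x"
      unfolding lengths_eq[OF n2] by blast
    obtain k where k: "(move ^^ k) A A1" using struct[of A A1 0 A1] v1 A nm by auto
    have "k \<noteq> 1"
    proof
      assume "k = 1"
      then have "move A A1" using k by (simp only: One_nat_def relpowp_Suc_0)
      then obtain j A0 where j: "A = A0 + replicate_mset d (Suc j)" "A1 = A0 + replicate_mset n j"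
        unfolding move_def by blast
      have "count A1 j \<ge> n" using j(2) by simp
      then have "j = 0" using n2 unfolding A1_def by (auto split: if_splits)
      then have "count A 1 \<ge> d" using j(1) by simp
      then have "0 < count A 1" using d2 by linarith
      then have "1 \<in># A" by simp
      then show False using A(2) one by auto
    qed
    moreover have "int (n ^ K) = int l + int k * (int n - int d)"
      using chain[OF k] A unfolding A1_def by simp
    ultimately show ?thesis by blast
  qed
  show ?thesis
  proof (cases "n < d")
    case True
    define l1 where "l1 = (LEAST l. l \<in> lengths ?M x \<and> n ^ K < l)"
    have dgt: "n ^ K < d ^ K" using True K(2) by (simp add: power_strict_mono)
    have l1: "l1 \<in> lengths ?M x" "n ^ K < l1"
      using LeastI[of "\<lambda>l. l \<in> lengths ?M x \<and> n ^ K < l" "d ^ K"] dL dgt unfolding l1_def by auto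
    have "l1 - n ^ K \<in> Delta ?M"
    proof (rule dist_intro[OF xM nL])
      show "n ^ K + (l1 - n ^ K) \<in> lengths ?M x" using l1 by simp
      show "0 < l1 - n ^ K" using l1 by simp
      fix j assume j: "n ^ K < j" "j < n ^ K + (l1 - n ^ K)"
      show "j \<notin> lengths ?M x"
        using not_less_Least[of j "\<lambda>l. l \<in> lengths ?M x \<and> n ^ K < l"] j l1 unfolding l1_def by auto
    qed
    moreover have "l1 - n ^ K \<noteq> nat \<bar>int n - int d\<bar>"
    proof -
      obtain k where k: "k \<noteq> 1" "int (n ^ K) = int l1 + int k * (int n - int d)" using P[OF l1(1)] by blast
      have "int k * (int d - int n) = int l1 - int (n ^ K)" using k(2) by (simp add: algebra_simps)
      then have pos: "int k * (int d - int n) > 0" using l1(2) by simp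
      then have "k \<ge> 2" using k(1) True by (cases k) auto
      then have "int k * (int d - int n) \<ge> 2 * (int d - int n)" using True by (intro mult_right_mono) auto
      moreover have h: "int (l1 - n ^ K) = int l1 - int (n ^ K)" using l1(2) by (simp add: of_nat_diff)
      ultimately show ?thesis using \<open>int k * (int d - int n) = int l1 - int (n ^ K)\<close> True
      proof -
        have "int (l1 - n ^ K) = int k * (int d - int n)" using h \<open>int k * (int d - int n) = int l1 - int (n ^ K)\<close> by simp
        then have "int (l1 - n ^ K) \<ge> 2 * (int d - int n)" using \<open>int k * (int d - int n) \<ge> 2 * (int d - int n)\<close> by simp
        moreover have "0 < int d - int n" using True by simp
        ultimately have "int (l1 - n ^ K) > int d - int n" by (rule lem2)
        then show ?thesis using True by auto
      qed
    qed
    ultimately show ?thesis by blast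
  next
    case False
    then have lt: "d < n" using n_ne_d by simp
    define l1 where "l1 = (GREATEST l. l \<in> lengths ?M x \<and> l < n ^ K)"
    have dlt: "d ^ K < n ^ K" using lt K(2) by (simp add: power_strict_mono)
    have bnd: "\<forall>y. y \<in> lengths ?M x \<and> y < n ^ K \<longrightarrow> y \<le> n ^ K" by auto
    have l1: "l1 \<in> lengths ?M x" "l1 < n ^ K"
      using GreatestI_nat[of "\<lambda>l. l \<in> lengths ?M x \<and> l < n ^ K" "d ^ K" "n ^ K"] dL dlt bnd
      unfolding l1_def by auto
    have "n ^ K - l1 \<in> Delta ?M"
    proof (rule dist_intro[OF xM l1(1)])
      show "l1 + (n ^ K - l1) \<in> lengths ?M x" using l1 nL by simp
      show "0 < n ^ K - l1" using l1 by simp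
      fix j assume j: "l1 < j" "j < l1 + (n ^ K - l1)"
      show "j \<notin> lengths ?M x"
      proof
        assume jL: "j \<in> lengths ?M x"
        have "j < n ^ K" using j l1(2) by simp
        then have "j \<le> l1" using jL Greatest_le_nat[of "\<lambda>l. l \<in> lengths ?M x \<and> l < n ^ K" j "n ^ K"] j bnd
          unfolding l1_def by auto
        then show False using j by simp
      qed
    qed
    moreover have "n ^ K - l1 \<noteq> nat \<bar>int n - int d\<bar>"
    proof -
      obtain k where k: "k \<noteq> 1" "int (n ^ K) = int l1 + int k * (int n - int d)" using P[OF l1(1)] by blast
      have eq: "int k * (int n - int d) = int (n ^ K) - int l1" using k(2) by (simp add: algebra_simps)
      then have pos: "int k * (int n - int d) > 0" using l1(2) by simp
      then have "k \<ge> 2" using k(1) lt by (cases k) auto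
      then have "int k * (int n - int d) \<ge> 2 * (int n - int d)" using lt by (intro mult_right_mono) auto
      moreover have h: "int (n ^ K - l1) = int (n ^ K) - int l1" using l1(2) by (simp add: of_nat_diff)
      ultimately show ?thesis
      proof -
        have "int (n ^ K - l1) = int k * (int n - int d)" using h eq by simp
        then have "int (n ^ K - l1) \<ge> 2 * (int n - int d)" using \<open>int k * (int n - int d) \<ge> 2 * (int n - int d)\<close> by simp
        moreover have "0 < int n - int d" using lt by simp
        ultimately have "int (n ^ K - l1) > int n - int d" by (rule lem2)
        then show ?thesis using lt by auto
      qed
    qed
    ultimately show ?thesis by blast
  qed
qed

end


context eps0 begin

lemma n1_not_atomic:
  assumes n1: "n = 1" and N0: "0 \<in> N" and cof: "\<And>j. B \<le> j \<Longrightarrow> j \<in> N"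
  shows "\<not> atomic (exp_puiseux r N)"
proof -
  let ?M = "exp_puiseux r N"
  have noat: "atoms ?M = {}"
  proof (rule ccontr)
    assume "atoms ?M \<noteq> {}"
    then obtain a where aA: "a \<in> atoms ?M" by blast
    then obtain k where kN: "k \<in> N" and ak: "a = r ^ k" using atoms_sub by blast
    define m where "m = Suc B"
    have kmN: "k + m \<in> N" using cof m_def by simp
    have "d \<le> d ^ m" using d2 m_def by (simp add: self_le_power)
    then have dm: "d ^ m \<ge> 2" using d2 by linarith
    have "r ^ k = of_nat (d ^ m) * r ^ (k + m)"
    proof -
      have "r * of_nat d = 1" using r_eq n1 d2 by simp
      then have "(r * of_nat d) ^ m = 1" by simp
      then have "r ^ m * of_nat d ^ m = 1" by (simp add: power_mult_distrib)
      then show ?thesis by (simp add: power_add algebra_simps)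
    qed
    also have "\<dots> = val {#k + m#} + val (replicate_mset (d ^ m - 1) (k + m))"
      using dm by (simp add: of_nat_diff algebra_simps)
    finally have eq: "a = val {#k + m#} + val (replicate_mset (d ^ m - 1) (k + m))" using ak by simp
    have b1: "val {#k + m#} \<in> ?M" using val_in[of "{#k+m#}" N] kmN by simp
    have b2: "val (replicate_mset (d ^ m - 1) (k + m)) \<in> ?M"
      using val_in[of "replicate_mset (d ^ m - 1) (k + m)" N] kmN by simp
    have nz1: "val {#k + m#} \<noteq> 0" using r_pos by simp
    have dm1: "d ^ m - 1 \<noteq> 0" using dm by linarith
    have "replicate_mset (d ^ m - 1) (k + m) \<noteq> {#}" using dm1 by simp
    then have nz2: "val (replicate_mset (d ^ m - 1) (k + m)) \<noteq> 0" using val_pos[of "replicate_mset (d ^ m - 1) (k + m)"] by linarith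
    have sp: "\<And>b c. b \<in> ?M \<Longrightarrow> c \<in> ?M \<Longrightarrow> a = b + c \<Longrightarrow> b = 0 \<or> c = 0"
      using aA unfolding atoms_def unit_iff by auto
    from sp[OF b1 b2 eq] nz1 nz2 show False by simp
  qed
  have oneM: "1 \<in> ?M" using val_in[of "{#0#}" N] N0 by simp
  show ?thesis
  proof
    assume "atomic ?M"
    then have "\<exists>mm. set_mset mm \<subseteq> atoms ?M \<and> mm \<noteq> {#} \<and> sum_mset mm = 1"
      using oneM unfolding atomic_def unit_iff by simp
    then show False using noat by auto
  qed
qed

end

theorem mainTheorem11:
  fixes r :: rat and N :: "nat set"
  assumes "r > 0" and "r \<notin> \<nat>" and "numerical_monoid N"
    and "atomic (exp_puiseux r N)"
  shows "card (Delta (exp_puiseux r N)) = 1 \<longleftrightarrow> N = UNIV"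
proof -
  obtain p q where pq: "quotient_of r = (p, q)" by (cases "quotient_of r") auto
  have q0: "q > 0" using quotient_of_denom_pos[OF pq] .
  have cpq: "coprime p q" using quotient_of_coprime[OF pq] .
  have rpq: "r = of_int p / of_int q" using quotient_of_div[OF pq] .
  have p0: "p > 0" using assms(1) rpq q0 by (simp add: zero_less_divide_iff)
  have q1: "q \<noteq> 1"
  proof
    assume "q = 1"
    then have "r = of_nat (nat p)" using rpq p0 by simp
    then have "r \<in> \<nat>" by (simp only: of_nat_in_Nats)
    then show False using assms(2) by simp
  qed
  define n where "n = nat p"
  define d where "d = nat q"
  have eps: "eps0 n d r"
  proof
    show "r = of_nat n / of_nat d" unfolding n_def d_def using rpq p0 q0 by simp
    show "2 \<le> d" unfolding d_def using q0 q1 by simp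
    show "1 \<le> n" unfolding n_def using p0 by simp
    have "int n = p" "int d = q" unfolding n_def d_def using p0 q0 by simp_all
    then show "coprime n d" using cpq coprime_int_iff[of n d] by simp
  qed
  have N0: "0 \<in> N" and Nadd: "\<And>a b. a \<in> N \<Longrightarrow> b \<in> N \<Longrightarrow> a + b \<in> N" and fin: "finite (UNIV - N)"
    using assms(3) unfolding numerical_monoid_def by auto
  obtain B where B: "\<And>j. B \<le> j \<Longrightarrow> j \<in> N"
  proof -
    obtain b where "\<forall>x\<in>UNIV - N. x < b" using fin finite_nat_set_iff_bounded by blast
    then have "\<And>j. b \<le> j \<Longrightarrow> j \<in> N" by (meson DiffI UNIV_I not_le)
    then show ?thesis using that by blast
  qed
  have n2: "2 \<le> n"
  proof (rule ccontr)
    assume "\<not> 2 \<le> n"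
    then have "n = 1" using eps0.n1[OF eps] by simp
    from eps0.n1_not_atomic[OF eps this N0 B] assms(4) show False by simp
  qed
  show ?thesis
  proof
    assume c1: "card (Delta (exp_puiseux r N)) = 1"
    show "N = UNIV"
    proof (rule ccontr)
      assume "N \<noteq> UNIV"
      have one: "1 \<notin> N"
      proof
        assume "1 \<in> N"
        then have "\<forall>k. k \<in> N" 
        proof -
          have "k \<in> N" for k
          proof (induction k)
            case 0 show ?case using N0 .
          next
            case (Suc k) show ?case using Nadd[OF Suc.IH \<open>1 \<in> N\<close>] by simp
          qed
          then show ?thesis by blast
        qed
        then show False using \<open>N \<noteq> UNIV\<close> by auto
      qed
      define K where "K = Suc B"
      have K: "K \<in> N" "Suc K \<in> N" "1 \<le> K" using B K_def by auto
      have din: "nat \<bar>int n - int d\<bar> \<in> Delta (exp_puiseux r N)"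
        using eps0.delta_in[OF eps n2 K(1,2)] .
      obtain e where e: "e \<in> Delta (exp_puiseux r N)" "e \<noteq> nat \<bar>int n - int d\<bar>"
        using eps0.other[OF eps n2 one K(1) K(3) N0] by blast
      from c1 obtain a where "Delta (exp_puiseux r N) = {a}" by (rule card_1_singletonE)
      then show False using din e by auto
    qed
  next
    assume NU: "N = UNIV"
    have "Delta (exp_puiseux r N) = {nat \<bar>int n - int d\<bar>}"
    proof
      show "Delta (exp_puiseux r N) \<subseteq> {nat \<bar>int n - int d\<bar>}"
        using eps0.upper[OF eps n2] NU by blast
      show "{nat \<bar>int n - int d\<bar>} \<subseteq> Delta (exp_puiseux r N)"
        using eps0.delta_in[OF eps n2, of 0 N] NU by simp
    qed
    then show "card (Delta (exp_puiseux r N)) = 1" by simp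
  qed
qed


end
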